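(* Let $\Upsilon_{0:k}$ be the Choi operator of a valid $k$-slot process tensor on $n$ qubits, and let $\Upsilon^{\mathcal{T}_P}_{0:k}:=\mathcal{T}_P^{(k)}(\Upsilon_{0:k})$ be its multi-time Pauli twirl. Then $\Upsilon^{\mathcal{T}_P}_{0:k}$ admits the process-separable decomposition \[ \Upsilon^{\mathcal{T}_P}_{0:k}=\sum_{\mathcal{P}\in\mathbb{P}^{(n,k)}}\Pr(\mathcal{P})\,\Upsilon_{\mathcal{P}},\qquad \Upsilon_{\mathcal{P}}=\bigotimes_{j=0}^k\Pi_{P_j}, \] where, for a trajectory $\mathcal{P}=(P_0,\dots,P_k)$, \[ \Pr(\mathcal{P})=\frac{w(\mathcal{P})}{\mathcal{N}},\qquad w(\mathcal{P}):=\mathrm{Tr}\Big[\Big(\bigotimes_{j=0}^k\Pi_{P_j}\Big)\Upsilon_{0:k}\Big]\ge 0,\qquad \mathcal{N}:=\sum_{\mathcal{P}\in\mathbb{P}^{(n,k)}}w(\mathcal{P}), \] and the numbers $\Pr(\mathcal{P})$ form a valid probability distribution on $\mathbb{P}^{(n,k)}$.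
   Context: $\mathbb{P}^{(n)}=\{I,X,Y,Z\}^{\otimes n}$ is the set of $n$-qubit Pauli operators (modulo phase), and $\mathbb{P}^{(n,k)}=(\mathbb{P}^{(n)})^{k+1}$ is the set of spatiotemporal Pauli trajectories $\mathcal{P}=(P_0,\dots,P_k)$. For $P\in\mathbb{P}^{(n)}$, $|P\rangle\!\rangle=(\mathbb{I}\otimes P)\sum_i|i\rangle|i\rangle$ is its vectorisation and $\Pi_P=|P\rangle\!\rangle\langle\!\langle P|$ (the Choi operator of the channel $\rho\mapsto P\rho P$), acting on $\mathcal{H}_{\mathfrak{i}_j}\otimes\mathcal{H}_{\mathfrak{o}_j}$ in the $j$-th factor. A $k$-slot process tensor has Choi operator $\Upsilon_{0:k}$ on $\bigotimes_{j=0}^k(\mathcal{H}_{\mathfrak{i}_j}\otimes\mathcal{H}_{\mathfrak{o}_j})$ (each factor an $n$-qubit space, $\mathfrak{i}_j,\mathfrak{o}_j$ the input/output at time step $j$); it is valid iff $\Upsilon_{0:k}\ge0$ and there are operators $\Upsilon_{0:j}$ on the first $j+1$ slots ($\Upsilon_{0:k}$ the given one) with $\mathrm{Tr}_{\mathfrak{o}_j}[\Upsilon_{0:j}]=\Upsilon_{0:j-1}\otimes\mathbb{I}_{\mathfrak{i}_j}$ for $j=1,\dots,k$ and $\mathrm{Tr}_{\mathfrak{o}_0}[\Upsilon_{0:0}]=\mathbb{I}_{\mathfrak{i}_0}$ (Choi operators use the unnormalised maximally entangled vector). The multi-time Pauli twirl is $\mathcal{T}_P^{(k)}(\Upsilon)=|\mathbb{P}^{(n)}|^{-(k+1)}\sum_{P_0,\dots,P_k\in\mathbb{P}^{(n)}}(\bigotimes_{j}P_j\otimes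 P_j)\Upsilon(\bigotimes_j P_j\otimes P_j)$, the $j$-th pair acting on $\mathcal{H}_{\mathfrak{i}_j}\otimes\mathcal{H}_{\mathfrak{o}_j}$. An operator is process-separable if it is a convex combination of tensor products $\Upsilon_0\otimes\cdots\otimes\Upsilon_k$ of Choi operators of CPTP channels (one per time step). *)

theory Defs
  imports "Jordan_Normal_Form.Matrix"
begin

text \<open>A multi-party space
  H_1 (x) ... (x) H_m is encoded via the Kronecker product, first factor most
  significant (index of |a>|b> is a * dim H_2 + b).\<close>

definition kron :: "complex mat \<Rightarrow> complex mat \<Rightarrow> complex mat" where
  "kron A B = mat (dim_row A * dim_row B) (dim_col A * dim_col B)
     (\<lambda>(i,j). A $$ (i div dim_row B, j div dim_col B) * B $$ (i mod dim_row B, j mod dim_col B))"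

definition kron_list :: "complex mat list \<Rightarrow> complex mat" where
  "kron_list As = foldr kron As (1\<^sub>m 1)"

definition msum :: "nat \<Rightarrow> ('a \<Rightarrow> complex mat) \<Rightarrow> 'a set \<Rightarrow> complex mat" where
  "msum D f S = mat D D (\<lambda>(a,b). \<Sum>x\<in>S. f x $$ (a,b))"

definition psd :: "nat \<Rightarrow> complex mat \<Rightarrow> bool" where
  "psd D A \<longleftrightarrow> A \<in> carrier_mat D D \<and>
     (\<forall>x :: nat \<Rightarrow> complex. let q = (\<Sum>i<D. \<Sum>j<D. cnj (x i) * A $$ (i,j) * x j)
        in q \<in> \<real> \<and> 0 \<le> Re q)"

definition ptrace_last :: "nat \<Rightarrow> complex mat \<Rightarrow> complex mat" where
  "ptrace_last d M = mat (dim_row M div d) (dim_col M div d)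
     (\<lambda>(a,b). \<Sum>c<d. M $$ (a * d + c, b * d + c))"

text \<open>Single-qubit Paulis: 0 = I, 1 = X, 2 = Y, 3 = Z.\<close>
definition pauli1 :: "nat \<Rightarrow> complex mat" where
  "pauli1 p = (if p = 1 then mat 2 2 (\<lambda>(i,j). if i \<noteq> j then 1 else 0)
     else if p = 2 then mat 2 2 (\<lambda>(i,j). if i = 0 \<and> j = 1 then - \<i> else if i = 1 \<and> j = 0 then \<i> else 0)
     else if p = 3 then mat 2 2 (\<lambda>(i,j). if i = j then (if i = 0 then 1 else -1) else 0)
     else 1\<^sub>m 2)"

definition pauli :: "nat list \<Rightarrow> complex mat" where
  "pauli ps = kron_list (map pauli1 ps)"

definition paulis :: "nat \<Rightarrow> nat list set" where
  "paulis n = {ps. length ps = n \<and> set ps \<subseteq> {..<4}}"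

definition trajectories :: "nat \<Rightarrow> nat \<Rightarrow> nat list list set" where
  "trajectories n k = {Ps. length Ps = Suc k \<and> set Ps \<subseteq> paulis n}"

text \<open>Vectorisation |P>> = (I (x) P) sum_i |i>|i>, entry at index i*d+j is P_(j,i).\<close>
definition vecP :: "complex mat \<Rightarrow> complex vec" where
  "vecP P = vec (dim_row P * dim_row P) (\<lambda>a. P $$ (a mod dim_row P, a div dim_row P))"

definition PiP :: "complex mat \<Rightarrow> complex mat" where
  "PiP P = (let v = vecP P; D = dim_vec v in mat D D (\<lambda>(a,b). v $ a * cnj (v $ b)))"

text \<open>Choi operator of a CPTP channel on a d-dimensional system (ordering H_i (x) H_o).\<close>
definition cptp_choi :: "nat \<Rightarrow> complex mat \<Rightarrow> bool" where
  "cptp_choi d C \<longleftrightarrow> psd (d * d) C \<and> ptrace_last d C = 1\<^sub>m d"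

text \<open>Valid k-slot process tensor on n qubits; slot order i_0,o_0,...,i_k,o_k.\<close>
definition process_tensor :: "nat \<Rightarrow> nat \<Rightarrow> complex mat \<Rightarrow> bool" where
  "process_tensor n k Ups \<longleftrightarrow> (let d = 2 ^ n in
     psd (d ^ (2 * Suc k)) Ups \<and>
     (\<exists>U :: nat \<Rightarrow> complex mat. U k = Ups \<and>
        (\<forall>j\<le>k. U j \<in> carrier_mat (d ^ (2 * Suc j)) (d ^ (2 * Suc j))) \<and>
        ptrace_last d (U 0) = 1\<^sub>m d \<and>
        (\<forall>j\<in>{1..k}. ptrace_last d (U j) = kron (U (j - 1)) (1\<^sub>m d))))"

definition pauli_twirl :: "nat \<Rightarrow> nat \<Rightarrow> complex mat \<Rightarrow> complex mat" where
  "pauli_twirl n k Ups =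
     msum (dim_row Ups)
       (\<lambda>Ps. (1 / of_nat (4 ^ n) ^ Suc k) \<cdot>\<^sub>m
          (let W = kron_list (map (\<lambda>p. kron (pauli p) (pauli p)) Ps) in W * Ups * W))
       (trajectories n k)"

definition mtrace :: "complex mat \<Rightarrow> complex" where
  "mtrace A = (\<Sum>i<dim_row A. A $$ (i,i))"

definition traj_op :: "nat list list \<Rightarrow> complex mat" where
  "traj_op Ps = kron_list (map (\<lambda>p. PiP (pauli p)) Ps)"

definition traj_weight :: "complex mat \<Rightarrow> nat list list \<Rightarrow> complex" where
  "traj_weight Ups Ps = mtrace (traj_op Ps * Ups)"

definition traj_norm :: "nat \<Rightarrow> nat \<Rightarrow> complex mat \<Rightarrow> complex" where
  "traj_norm n k Ups = (\<Sum>Ps\<in>trajectories n k. traj_weight Ups Ps)"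

definition traj_prob :: "nat \<Rightarrow> nat \<Rightarrow> complex mat \<Rightarrow> nat list list \<Rightarrow> complex" where
  "traj_prob n k Ups Ps = traj_weight Ups Ps / traj_norm n k Ups"

definition process_separable :: "nat \<Rightarrow> nat \<Rightarrow> complex mat \<Rightarrow> bool" where
  "process_separable d k M \<longleftrightarrow>
     (\<exists>(I :: nat set) (p :: nat \<Rightarrow> real) (C :: nat \<Rightarrow> complex mat list).
        finite I \<and> (\<forall>i\<in>I. 0 \<le> p i) \<and> (\<Sum>i\<in>I. p i) = 1 \<and>
        (\<forall>i\<in>I. length (C i) = Suc k \<and> (\<forall>c\<in>set (C i). cptp_choi d c)) \<and>
        M = msum (dim_row M) (\<lambda>i. complex_of_real (p i) \<cdot>\<^sub>m kron_list (C i)) I)"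

end

theory Submission
  imports Defs
begin
lemma sum_group: fixes f :: "nat \<Rightarrow> 'a::comm_monoid_add" shows "(\<Sum>i<q*d. f i) = (\<Sum>a<q. \<Sum>c<d. f (a*d+c))"
proof -
  have "(\<Sum>i<q*d. f i) = (\<Sum>a<q. sum f {a*d..<a*d+d})" using sum.nat_group[of f d q] by simp
  also have "\<dots> = (\<Sum>a<q. \<Sum>c<d. f (a*d+c))"
  proof (rule sum.cong[OF refl])
    fix a
    show "sum f {a*d..<a*d+d} = (\<Sum>c<d. f (a*d+c))"
      using sum.shift_bounds_nat_ivl[of f 0 "a*d" d] by (simp add: lessThan_atLeast0 add.commute)
  qed
  finally show ?thesis .
qed

lemma kron_carrier: "A \<in> carrier_mat m m \<Longrightarrow> B \<in> carrier_mat p p \<Longrightarrow> kron A B \<in> carrier_mat (m*p) (m*p)"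
  unfolding kron_def by (intro carrier_matI) auto
lemma kron_index: assumes "A \<in> carrier_mat m m" "B \<in> carrier_mat p p" "i < m*p" "j < m*p" shows
  "kron A B $$ (i,j) = A $$ (i div p, j div p) * B $$ (i mod p, j mod p)"
proof -
  have d: "dim_row A = m" "dim_row B = p" "dim_col A = m" "dim_col B = p" using assms by auto
  show ?thesis unfolding kron_def d using assms(3,4) by (subst index_mat) auto
qed
lemma kron_list_Cons: "kron_list (A # As) = kron A (kron_list As)"
  unfolding kron_list_def by simp
lemma kron_list_carrier: "\<forall>A\<in>set As. A \<in> carrier_mat m m \<Longrightarrow> kron_list As \<in> carrier_mat (m ^ length As) (m ^ length As)"
proof (induction As)
  case Nil then show ?case unfolding kron_list_def by simp
next
  case (Cons A As)
  then have "kron A (kron_list As) \<in> carrier_mat (m * m ^ length As) (m * m ^ length As)"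
    by (intro kron_carrier) auto
  then show ?case by (simp add: kron_list_Cons)
qed
lemma lists_Suc_sum: 
  assumes "finite S"
  shows "(\<Sum>xs\<in>{xs. length xs = Suc L \<and> set xs \<subseteq> S}. g xs) = (\<Sum>p\<in>S. \<Sum>xs\<in>{xs. length xs = L \<and> set xs \<subseteq> S}. g (p#xs))"
proof -
  have e: "{xs. length xs = Suc L \<and> set xs \<subseteq> S} = (\<lambda>(p,xs). p#xs) ` (S \<times> {xs. length xs = L \<and> set xs \<subseteq> S})"
    by (auto simp: length_Suc_conv image_iff)
  have i: "inj_on (\<lambda>(p,xs). p#xs) (S \<times> {xs. length xs = L \<and> set xs \<subseteq> S})" by (auto simp: inj_on_def)
  show ?thesis unfolding e sum.reindex[OF i] by (simp add: sum.cartesian_product split_def)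
qed

lemma lists_fin: "finite S \<Longrightarrow> finite {xs. length xs = L \<and> set xs \<subseteq> S}"
  using finite_lists_length_eq[of S L] by (simp add: conj_commute)

definition prodspec :: "complex mat \<Rightarrow> (bool \<times> nat \<times> nat) list \<Rightarrow> (nat \<Rightarrow> nat) \<Rightarrow> complex" where
  "prodspec A sp idx = prod_list (map (\<lambda>(cj,r,s). (if cj then cnj (A $$ (idx r, idx s)) else A $$ (idx r, idx s))) sp)"

definition validsp :: "nat \<Rightarrow> (bool \<times> nat \<times> nat) list \<Rightarrow> (nat \<Rightarrow> nat) \<Rightarrow> bool" where
  "validsp m sp idx \<longleftrightarrow> (\<forall>(cj,r,s)\<in>set sp. idx r < m \<and> idx s < m)"

lemma prodspec_kron:
  assumes "A \<in> carrier_mat m m" "B \<in> carrier_mat p p" "validsp (m*p) sp idx"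
  shows "prodspec (kron A B) sp idx = prodspec A sp (\<lambda>i. idx i div p) * prodspec B sp (\<lambda>i. idx i mod p)"
  using assms(3)
proof (induction sp)
  case Nil then show ?case by (simp add: prodspec_def)
next
  case (Cons t sp)
  obtain cj r s where t: "t = (cj,r,s)" by (cases t) auto
  from Cons.prems have v: "validsp (m*p) sp idx" "idx r < m*p" "idx s < m*p" by (auto simp: validsp_def t)
  show ?case using Cons.IH[OF v(1)] kron_index[OF assms(1,2) v(2,3)]
    by (simp add: prodspec_def t)
qed

lemma validsp_div: "validsp (m*p) sp idx \<Longrightarrow> validsp m sp (\<lambda>i. idx i div p)"
  by (auto simp: validsp_def intro: less_mult_imp_div_less)

lemma validsp_mod: "validsp (m*p) sp idx \<Longrightarrow> p > 0 \<Longrightarrow> validsp p sp (\<lambda>i. idx i mod p)"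
  by (auto simp: validsp_def)

lemma prodspec_one1: "validsp 1 sp idx \<Longrightarrow> prodspec (1\<^sub>m 1) sp idx = 1"
  by (induction sp) (auto simp: prodspec_def validsp_def)

lemma lift:
  assumes S: "finite S" and T: "finite T" and m: "m > 0"
    and F: "\<forall>p\<in>S. F p \<in> carrier_mat m m" and G: "\<forall>q\<in>T. G q \<in> carrier_mat m m"
    and base: "\<And>idx. validsp m sp1 idx \<Longrightarrow> validsp m sp2 idx \<Longrightarrow>
        (\<Sum>p\<in>S. prodspec (F p) sp1 idx) = c * (\<Sum>q\<in>T. prodspec (G q) sp2 idx)"
  shows "validsp (m^L) sp1 idx \<Longrightarrow> validsp (m^L) sp2 idx \<Longrightarrow>
     (\<Sum>Ps\<in>{xs. length xs = L \<and> set xs \<subseteq> S}. prodspec (kron_list (map F Ps)) sp1 idx)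
     = c^L * (\<Sum>Qs\<in>{xs. length xs = L \<and> set xs \<subseteq> T}. prodspec (kron_list (map G Qs)) sp2 idx)"
proof (induction L arbitrary: idx)
  case 0
  have e: "{xs. xs = [] \<and> set xs \<subseteq> X} = {[]}" for X :: "'z set" by auto
  show ?case using 0 prodspec_one1[of sp1 idx] prodspec_one1[of sp2 idx] by (simp add: e kron_list_def)
next
  case (Suc L)
  let ?M = "m^L"
  have M: "?M > 0" using m by simp
  have mm: "m^Suc L = m * ?M" by simp
  have cF: "kron_list (map F Ps) \<in> carrier_mat ?M ?M" if "length Ps = L" "set Ps \<subseteq> S" for Ps
    using kron_list_carrier[of "map F Ps" m] F that by auto
  have cG: "kron_list (map G Ps) \<in> carrier_mat ?M ?M" if "length Ps = L" "set Ps \<subseteq> T" for Ps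
    using kron_list_carrier[of "map G Ps" m] G that by auto
  have v1: "validsp (m*?M) sp1 idx" and v2: "validsp (m*?M) sp2 idx" using Suc.prems mm by metis+
  let ?d = "\<lambda>i. idx i div ?M" and ?r = "\<lambda>i. idx i mod ?M"
  have "(\<Sum>Ps\<in>{xs. length xs = Suc L \<and> set xs \<subseteq> S}. prodspec (kron_list (map F Ps)) sp1 idx)
     = (\<Sum>p\<in>S. \<Sum>Ps\<in>{xs. length xs = L \<and> set xs \<subseteq> S}. prodspec (F p) sp1 ?d * prodspec (kron_list (map F Ps)) sp1 ?r)"
    unfolding lists_Suc_sum[OF S]
    by (intro sum.cong refl, simp add: kron_list_Cons, rule prodspec_kron[OF _ cF v1], use F in auto)
  also have "\<dots> = (\<Sum>p\<in>S. prodspec (F p) sp1 ?d) * (\<Sum>Ps\<in>{xs. length xs = L \<and> set xs \<subseteq> S}. prodspec (kron_list (map F Ps)) sp1 ?r)"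
    by (simp add: sum_product)
  also have "\<dots> = (c * (\<Sum>q\<in>T. prodspec (G q) sp2 ?d)) * (c^L * (\<Sum>Qs\<in>{xs. length xs = L \<and> set xs \<subseteq> T}. prodspec (kron_list (map G Qs)) sp2 ?r))"
    using base[OF validsp_div[OF v1] validsp_div[OF v2]] Suc.IH[OF validsp_mod[OF v1 M] validsp_mod[OF v2 M]] by simp
  also have "\<dots> = c^Suc L * (\<Sum>q\<in>T. \<Sum>Qs\<in>{xs. length xs = L \<and> set xs \<subseteq> T}. prodspec (G q) sp2 ?d * prodspec (kron_list (map G Qs)) sp2 ?r)"
    by (simp add: sum_product mult_ac)
  also have "\<dots> = c^Suc L * (\<Sum>Qs\<in>{xs. length xs = Suc L \<and> set xs \<subseteq> T}. prodspec (kron_list (map G Qs)) sp2 idx)"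
    unfolding lists_Suc_sum[OF T]
    by (intro arg_cong2[where f="(*)"] refl sum.cong, simp add: kron_list_Cons, rule prodspec_kron[OF _ cG v2, symmetric], use G in auto)
  finally show ?case .
qed

lemma t0: "pauli1 0 $$ (0,0) = 1" by (simp add: pauli1_def)
lemma t1: "pauli1 0 $$ (0,Suc 0) = 0" by (simp add: pauli1_def)
lemma t2: "pauli1 0 $$ (Suc 0,0) = 0" by (simp add: pauli1_def)
lemma t3: "pauli1 0 $$ (Suc 0,Suc 0) = 1" by (simp add: pauli1_def)
lemma t4: "pauli1 (Suc 0) $$ (0,0) = 0" by (simp add: pauli1_def)
lemma t5: "pauli1 (Suc 0) $$ (0,Suc 0) = 1" by (simp add: pauli1_def)
lemma t6: "pauli1 (Suc 0) $$ (Suc 0,0) = 1" by (simp add: pauli1_def)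
lemma t7: "pauli1 (Suc 0) $$ (Suc 0,Suc 0) = 0" by (simp add: pauli1_def)
lemma t8: "pauli1 2 $$ (0,0) = 0" by (simp add: pauli1_def)
lemma t9: "pauli1 2 $$ (0,Suc 0) = -\<i>" by (simp add: pauli1_def)
lemma t10: "pauli1 2 $$ (Suc 0,0) = \<i>" by (simp add: pauli1_def)
lemma t11: "pauli1 2 $$ (Suc 0,Suc 0) = 0" by (simp add: pauli1_def)
lemma t12: "pauli1 3 $$ (0,0) = 1" by (simp add: pauli1_def)
lemma t13: "pauli1 3 $$ (0,Suc 0) = 0" by (simp add: pauli1_def)
lemma t14: "pauli1 3 $$ (Suc 0,0) = 0" by (simp add: pauli1_def)
lemma t15: "pauli1 3 $$ (Suc 0,Suc 0) = -1" by (simp add: pauli1_def)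

lemmas Ps = t0 t1 t2 t3 t4 t5 t6 t7 t8 t9 t10 t11 t12 t13 t14 t15

lemma sum4: "(\<Sum>p\<in>{0,1,2,3::nat}. f p) = f 0 + f 1 + f 2 + f 3" by (simp add: algebra_simps)

lemma qH: "\<forall>a1\<in>{0,1::nat}. \<forall>a2\<in>{0,1::nat}. \<forall>c1\<in>{0,1::nat}. \<forall>c2\<in>{0,1::nat}.
  \<forall>e1\<in>{0,1::nat}. \<forall>e2\<in>{0,1::nat}. \<forall>b1\<in>{0,1::nat}. \<forall>b2\<in>{0,1::nat}.
  (\<Sum>p\<in>{0,1,2,3::nat}. pauli1 p $$ (a1,c1) * pauli1 p $$ (a2,c2) * pauli1 p $$ (e1,b1) * pauli1 p $$ (e2,b2))
  = (\<Sum>p\<in>{0,1,2,3::nat}. pauli1 p $$ (e2,e1) * cnj (pauli1 p $$ (c2,c1)) * pauli1 p $$ (a2,a1) * cnj (pauli1 p $$ (b2,b1)))"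
  unfolding sum4 by (simp add: Ps)

lemma qD: "\<forall>a\<in>{0,1::nat}. \<forall>b\<in>{0,1::nat}. \<forall>c\<in>{0,1::nat}. \<forall>e\<in>{0,1::nat}.
  (\<Sum>p\<in>{0,1,2,3::nat}. pauli1 p $$ (a,b) * cnj (pauli1 p $$ (c,e))) = 2 * ((if a = c then 1 else 0) * (if b = e then 1 else 0))"
  unfolding sum4 by (simp add: Ps)

lemma qU: "\<forall>a\<in>{0,1::nat}. \<forall>b\<in>{0,1::nat}. pauli1 p \<in> carrier_mat 2 2 \<and>
  (\<Sum>c<2. pauli1 p $$ (c,a) * cnj (pauli1 p $$ (c,b))) = (if a = b then 1 else 0)"
  by (auto simp: pauli1_def numeral_2_eq_2 lessThan_Suc)

lemma pauli1_carrier: "pauli1 p \<in> carrier_mat 2 2"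
  using qU by blast

lemma pauli_carrier: "length ps = n \<Longrightarrow> pauli ps \<in> carrier_mat (2^n) (2^n)"
  unfolding pauli_def using kron_list_carrier[of "map pauli1 ps" 2] pauli1_carrier by auto

lemma paulis_fin: "finite (paulis n)"
  unfolding paulis_def using lists_fin[of "{..<4::nat}" n] by simp

lemma prodspec_Nil: "prodspec A [] idx = 1" by (simp add: prodspec_def)
lemma prodspec_Cons: "prodspec A ((cj,r,s)#sp) idx = (if cj then cnj (A$$(idx r, idx s)) else A$$(idx r, idx s)) * prodspec A sp idx"
  by (simp add: prodspec_def)

lemma lt2: "(x::nat) < 2 \<Longrightarrow> x \<in> {0,1}" by auto

lemma pauli_H:
  assumes "a1 < 2^n" "a2 < 2^n" "c1 < 2^n" "c2 < 2^n" "e1 < 2^n" "e2 < 2^n" "b1 < 2^n" "b2 < 2^n"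
  shows "(\<Sum>ps\<in>paulis n. pauli ps $$ (a1,c1) * pauli ps $$ (a2,c2) * pauli ps $$ (e1,b1) * pauli ps $$ (e2,b2))
  = (\<Sum>ps\<in>paulis n. pauli ps $$ (e2,e1) * cnj (pauli ps $$ (c2,c1)) * pauli ps $$ (a2,a1) * cnj (pauli ps $$ (b2,b1)))"
proof -
  let ?sp1 = "[(False,0,2),(False,1,3),(False,4,6),(False,5,7)] :: (bool\<times>nat\<times>nat) list"
  let ?sp2 = "[(False,5,4),(True,3,2),(False,1,0),(True,7,6)] :: (bool\<times>nat\<times>nat) list"
  have base: "(\<Sum>p\<in>{..<4::nat}. prodspec (pauli1 p) ?sp1 idx) = 1 * (\<Sum>p\<in>{..<4::nat}. prodspec (pauli1 p) ?sp2 idx)"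
    if "validsp 2 ?sp1 idx" "validsp 2 ?sp2 idx" for idx
  proof -
    from that have "idx 0 \<in> {0,1}" "idx 1 \<in> {0,1}" "idx 2 \<in> {0,1}" "idx 3 \<in> {0,1}"
      "idx 4 \<in> {0,1}" "idx 5 \<in> {0,1}" "idx 6 \<in> {0,1}" "idx 7 \<in> {0,1}"
      by (auto simp: validsp_def intro!: lt2)
    note q = qH[rule_format, OF this(1,2,3,4,5,6,7,8)]
    have e: "{..<4::nat} = {0,1,2,3}" by auto
    show ?thesis using q unfolding e prodspec_Cons prodspec_Nil by (simp add: mult.assoc)
  qed
  let ?idx = "\<lambda>i. [a1,a2,c1,c2,e1,e2,b1,b2] ! i"
  have v1: "validsp (2^n) ?sp1 ?idx" and v2: "validsp (2^n) ?sp2 ?idx" using assms by (auto simp: validsp_def)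
  have "\<forall>p\<in>{..<4::nat}. pauli1 p \<in> carrier_mat 2 2" using pauli1_carrier by auto
  note L = lift[OF finite_lessThan finite_lessThan _ this this base, of n ?idx, OF _ _ _ v1 v2]
  show ?thesis using L unfolding paulis_def pauli_def prodspec_Cons prodspec_Nil
    by (simp add: mult.assoc)
qed

lemma kron_one: "kron (1\<^sub>m a) (1\<^sub>m b) = 1\<^sub>m (a*b)"
proof (rule eq_matI)
  fix i j assume ij: "i < dim_row (1\<^sub>m (a*b))" "j < dim_col (1\<^sub>m (a*b))"
  then have "i < a*b" "j < a*b" by auto
  moreover have "(i div b = j div b \<and> i mod b = j mod b) \<longleftrightarrow> i = j"
    by (metis div_mult_mod_eq)
  moreover have "i mod b < b" "j mod b < b" "i div b < a" "j div b < a" using \<open>i < a*b\<close> \<open>j < a*b\<close>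
    by (auto simp: less_mult_imp_div_less mult.commute intro: mod_less_divisor)
       (metis mult_zero_right not_less_zero gr0I mod_less_divisor)+
  ultimately show "kron (1\<^sub>m a) (1\<^sub>m b) $$ (i, j) = 1\<^sub>m (a*b) $$ (i, j)"
    by (simp add: kron_index[of "1\<^sub>m a" a "1\<^sub>m b" b] del: One_nat_def; blast)
qed (auto simp: kron_def)

lemma kron_list_ones: "kron_list (replicate L (1\<^sub>m b)) = 1\<^sub>m (b ^ L)"
  by (induction L) (auto simp: kron_list_def kron_one)

lemma lists_single: "{xs. length xs = L \<and> set xs \<subseteq> {x}} = {replicate L x}"
  by (auto intro: replicate_length_same[symmetric])

lemma pauli_D:
  assumes "a < 2^n" "b < 2^n" "c < 2^n" "e < 2^n"
  shows "(\<Sum>ps\<in>paulis n. pauli ps $$ (a,b) * cnj (pauli ps $$ (c,e))) = 2^n * ((if a = c then 1 else 0) * (if b = e then 1 else 0))"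
proof -
  let ?sp1 = "[(False,0,1),(True,2,3)] :: (bool\<times>nat\<times>nat) list"
  let ?sp2 = "[(False,0,2),(False,1,3)] :: (bool\<times>nat\<times>nat) list"
  have base: "(\<Sum>p\<in>{..<4::nat}. prodspec (pauli1 p) ?sp1 idx) = 2 * (\<Sum>p\<in>{0::nat}. prodspec (1\<^sub>m 2) ?sp2 idx)"
    if "validsp 2 ?sp1 idx" "validsp 2 ?sp2 idx" for idx
  proof -
    from that have "idx 0 \<in> {0,1}" "idx 1 \<in> {0,1}" "idx 2 \<in> {0,1}" "idx 3 \<in> {0,1}"
      by (auto simp: validsp_def intro!: lt2)
    note q = qD[rule_format, OF this(1,2,3,4)]
    have e: "{..<4::nat} = {0,1,2,3}" by auto
    show ?thesis using q that unfolding e by (simp add: prodspec_def validsp_def)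
  qed
  let ?idx = "\<lambda>i. [a,b,c,e] ! i"
  have v1: "validsp (2^n) ?sp1 ?idx" and v2: "validsp (2^n) ?sp2 ?idx" using assms by (auto simp: validsp_def)
  have c1: "\<forall>p\<in>{..<4::nat}. pauli1 p \<in> carrier_mat 2 2" using pauli1_carrier by auto
  have c2: "\<forall>p\<in>{0::nat}. 1\<^sub>m 2 \<in> carrier_mat 2 2" by auto
  note L = lift[OF finite_lessThan finite.intros(2)[OF finite.intros(1)] _ c1 c2 base, of n ?idx, OF _ _ _ v1 v2]
  show ?thesis using L assms unfolding paulis_def pauli_def by (simp add: prodspec_def lists_single kron_list_ones)
qed

lemma div_lt: "i < m*p \<Longrightarrow> i div p < (m::nat)" by (simp add: less_mult_imp_div_less)
lemma mod_lt: "i < m*p \<Longrightarrow> i mod p < (p::nat)" by (cases "p = 0") auto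

lemma PiP_carrier: "P \<in> carrier_mat d d \<Longrightarrow> PiP P \<in> carrier_mat (d*d) (d*d)"
  unfolding PiP_def vecP_def Let_def by (intro carrier_matI) auto

lemma PiP_index: assumes "P \<in> carrier_mat d d" "i < d*d" "j < d*d"
  shows "PiP P $$ (i,j) = P $$ (i mod d, i div d) * cnj (P $$ (j mod d, j div d))"
proof -
  have "dim_row P = d" using assms by auto
  then show ?thesis unfolding PiP_def vecP_def Let_def using assms(2,3) by simp
qed

lemma pauli_carrier': "ps \<in> paulis n \<Longrightarrow> pauli ps \<in> carrier_mat (2^n) (2^n)"
  by (rule pauli_carrier) (simp add: paulis_def)

lemma slot_K:
  assumes "a < 2^n*2^n" "b < 2^n*2^n" "c < 2^n*2^n" "e < 2^n*2^n"
  shows "(\<Sum>ps\<in>paulis n. kron (pauli ps) (pauli ps) $$ (a,c) * kron (pauli ps) (pauli ps) $$ (e,b))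
       = (\<Sum>ps\<in>paulis n. PiP (pauli ps) $$ (e,c) * PiP (pauli ps) $$ (a,b))"
proof -
  let ?d = "2^n :: nat"
  have "(\<Sum>ps\<in>paulis n. kron (pauli ps) (pauli ps) $$ (a,c) * kron (pauli ps) (pauli ps) $$ (e,b))
     = (\<Sum>ps\<in>paulis n. pauli ps $$ (a div ?d, c div ?d) * pauli ps $$ (a mod ?d, c mod ?d)
          * pauli ps $$ (e div ?d, b div ?d) * pauli ps $$ (e mod ?d, b mod ?d))"
    by (intro sum.cong refl) (simp add: kron_index[OF pauli_carrier' pauli_carrier'] assms mult.assoc)
  also have "\<dots> = (\<Sum>ps\<in>paulis n. pauli ps $$ (e mod ?d, e div ?d) * cnj (pauli ps $$ (c mod ?d, c div ?d))
          * pauli ps $$ (a mod ?d, a div ?d) * cnj (pauli ps $$ (b mod ?d, b div ?d)))"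
    by (rule pauli_H) (use assms in \<open>auto intro: div_lt mod_lt\<close>)
  also have "\<dots> = (\<Sum>ps\<in>paulis n. PiP (pauli ps) $$ (e,c) * PiP (pauli ps) $$ (a,b))"
    by (intro sum.cong refl) (simp add: PiP_index[OF pauli_carrier'] assms mult.assoc)
  finally show ?thesis .
qed

lemma slot_D:
  assumes "i < 2^n*2^n" "c < 2^n*2^n"
  shows "(\<Sum>ps\<in>paulis n. PiP (pauli ps) $$ (i,c)) = 2^n * (if i = c then 1 else 0)"
proof -
  let ?d = "2^n :: nat"
  have "(\<Sum>ps\<in>paulis n. PiP (pauli ps) $$ (i,c))
     = (\<Sum>ps\<in>paulis n. pauli ps $$ (i mod ?d, i div ?d) * cnj (pauli ps $$ (c mod ?d, c div ?d)))"
    by (intro sum.cong refl) (simp add: PiP_index[OF pauli_carrier'] assms)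
  also have "\<dots> = 2^n * ((if i mod ?d = c mod ?d then 1 else 0) * (if i div ?d = c div ?d then 1 else 0))"
    by (rule pauli_D) (use assms in \<open>auto intro: div_lt mod_lt\<close>)
  also have "\<dots> = 2^n * (if i = c then 1 else 0)"
  proof -
    have "(i mod ?d = c mod ?d \<and> i div ?d = c div ?d) \<longleftrightarrow> i = c" by (metis div_mult_mod_eq)
    then show ?thesis by auto
  qed
  finally show ?thesis .
qed

lemma traj_K:
  assumes "a < (2^n*2^n)^L" "b < (2^n*2^n)^L" "c < (2^n*2^n)^L" "e < (2^n*2^n)^L"
  shows "(\<Sum>Ps\<in>{xs. length xs = L \<and> set xs \<subseteq> paulis n}.
            kron_list (map (\<lambda>p. kron (pauli p) (pauli p)) Ps) $$ (a,c) * kron_list (map (\<lambda>p. kron (pauli p) (pauli p)) Ps) $$ (e,b))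
       = (\<Sum>Ps\<in>{xs. length xs = L \<and> set xs \<subseteq> paulis n}.
            kron_list (map (\<lambda>p. PiP (pauli p)) Ps) $$ (e,c) * kron_list (map (\<lambda>p. PiP (pauli p)) Ps) $$ (a,b))"
proof -
  let ?m = "2^n*2^n :: nat"
  let ?sp1 = "[(False,0,2),(False,3,1)] :: (bool\<times>nat\<times>nat) list"
  let ?sp2 = "[(False,3,2),(False,0,1)] :: (bool\<times>nat\<times>nat) list"
  have base: "(\<Sum>p\<in>paulis n. prodspec (kron (pauli p) (pauli p)) ?sp1 idx) = 1 * (\<Sum>p\<in>paulis n. prodspec (PiP (pauli p)) ?sp2 idx)"
    if "validsp ?m ?sp1 idx" "validsp ?m ?sp2 idx" for idx
  proof -
    have v: "idx 0 < ?m" "idx 1 < ?m" "idx 2 < ?m" "idx 3 < ?m" using that by (auto simp: validsp_def)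
    show ?thesis unfolding prodspec_Cons prodspec_Nil using slot_K[OF v(1,2,3,4)] by simp
  qed
  have c1: "\<forall>p\<in>paulis n. kron (pauli p) (pauli p) \<in> carrier_mat ?m ?m"
    using kron_carrier pauli_carrier' by blast
  have c2: "\<forall>p\<in>paulis n. PiP (pauli p) \<in> carrier_mat ?m ?m"
    using PiP_carrier pauli_carrier' by blast
  let ?idx = "\<lambda>i. [a,b,c,e] ! i"
  have v1: "validsp (?m^L) ?sp1 ?idx" and v2: "validsp (?m^L) ?sp2 ?idx" using assms by (auto simp: validsp_def)
  have m: "?m > 0" by simp
  note L = lift[OF paulis_fin paulis_fin m c1 c2 base, of L ?idx, OF _ _ v1 v2]
  show ?thesis using L unfolding prodspec_Cons prodspec_Nil by simp
qed

lemma traj_D: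
  assumes "i < (2^n*2^n)^L" "c < (2^n*2^n)^L"
  shows "(\<Sum>Ps\<in>{xs. length xs = L \<and> set xs \<subseteq> paulis n}. kron_list (map (\<lambda>p. PiP (pauli p)) Ps) $$ (i,c))
       = (2^n)^L * (if i = c then 1 else 0)"
proof -
  let ?m = "2^n*2^n :: nat"
  let ?sp = "[(False,0,1)] :: (bool\<times>nat\<times>nat) list"
  have base: "(\<Sum>p\<in>paulis n. prodspec (PiP (pauli p)) ?sp idx) = 2^n * (\<Sum>p\<in>{0::nat}. prodspec (1\<^sub>m ?m) ?sp idx)"
    if "validsp ?m ?sp idx" "validsp ?m ?sp idx" for idx
  proof -
    have v: "idx 0 < ?m" "idx 1 < ?m" using that by (auto simp: validsp_def)
    show ?thesis unfolding prodspec_Cons prodspec_Nil using slot_D[OF v(1,2)] v by simp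
  qed
  have c2: "\<forall>p\<in>paulis n. PiP (pauli p) \<in> carrier_mat ?m ?m"
    using PiP_carrier pauli_carrier' by blast
  have c3: "\<forall>p\<in>{0::nat}. 1\<^sub>m ?m \<in> carrier_mat ?m ?m" by auto
  let ?idx = "\<lambda>j. [i,c] ! j"
  have v1: "validsp (?m^L) ?sp ?idx" using assms by (auto simp: validsp_def)
  have m: "?m > 0" by simp
  note L = lift[OF paulis_fin finite.intros(2)[OF finite.intros(1)] m c2 c3 base, of L ?idx, OF _ _ v1 v1]
  show ?thesis using L assms unfolding prodspec_Cons prodspec_Nil by (simp add: lists_single kron_list_ones)
qed

lemma idx_lt: assumes "a < q" "b < (d::nat)" shows "a*d+b < q*d"
proof -
  have "a*d + b < a*d + d" using assms by simp
  also have "\<dots> = Suc a * d" by simp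
  also have "\<dots> \<le> q*d" using assms by (intro mult_le_mono1) simp
  finally show ?thesis .
qed

definition colorth :: "nat \<Rightarrow> complex mat \<Rightarrow> bool" where
  "colorth m A \<longleftrightarrow> A \<in> carrier_mat m m \<and>
     (\<forall>a<m. \<forall>b<m. (\<Sum>c<m. A$$(c,a) * cnj (A$$(c,b))) = (if a = b then 1 else 0))"

lemma colorth_kron:
  assumes A: "colorth m A" and B: "colorth p B"
  shows "colorth (m*p) (kron A B)"
proof -
  have cA: "A \<in> carrier_mat m m" and cB: "B \<in> carrier_mat p p" using A B by (auto simp: colorth_def)
  have "(\<Sum>c<m*p. kron A B $$ (c,a) * cnj (kron A B $$ (c,b))) = (if a = b then 1 else 0)"
    if ab: "a < m*p" "b < m*p" for a b
  proof -
    have pp: "p > 0" using ab by (cases "p = 0") auto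
    have "(\<Sum>c<m*p. kron A B $$ (c,a) * cnj (kron A B $$ (c,b)))
       = (\<Sum>c1<m. \<Sum>c2<p. kron A B $$ (c1*p+c2,a) * cnj (kron A B $$ (c1*p+c2,b)))"
      by (rule sum_group)
    also have "\<dots> = (\<Sum>c1<m. \<Sum>c2<p. (A $$ (c1, a div p) * cnj (A $$ (c1, b div p))) * (B $$ (c2, a mod p) * cnj (B $$ (c2, b mod p))))"
    proof (intro sum.cong refl)
      fix c1 c2 assume c: "c1 \<in> {..<m}" "c2 \<in> {..<p}"
      then have lt: "c1*p+c2 < m*p" using idx_lt by auto
      have dm: "(c1*p+c2) div p = c1" "(c1*p+c2) mod p = c2" "c2 mod p = c2" using c by auto
      show "kron A B $$ (c1*p+c2,a) * cnj (kron A B $$ (c1*p+c2,b)) =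
          (A $$ (c1, a div p) * cnj (A $$ (c1, b div p))) * (B $$ (c2, a mod p) * cnj (B $$ (c2, b mod p)))"
        by (simp add: kron_index[OF cA cB lt ab(1)] kron_index[OF cA cB lt ab(2)] dm mult_ac)
    qed
    also have "\<dots> = (\<Sum>c1<m. A $$ (c1, a div p) * cnj (A $$ (c1, b div p))) * (\<Sum>c2<p. B $$ (c2, a mod p) * cnj (B $$ (c2, b mod p)))"
      by (simp add: sum_product)
    also have "\<dots> = (if a div p = b div p then 1 else 0) * (if a mod p = b mod p then 1 else 0)"
      using A B ab pp by (simp add: colorth_def div_lt mod_lt)
    also have "\<dots> = (if a = b then 1 else 0)"
    proof -
      have "(a div p = b div p \<and> a mod p = b mod p) \<longleftrightarrow> a = b" by (metis div_mult_mod_eq)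
      then show ?thesis by auto
    qed
    finally show ?thesis .
  qed
  then show ?thesis using kron_carrier[OF cA cB] by (simp add: colorth_def)
qed

lemma colorth_pauli: "colorth (2 ^ length ps) (pauli ps)"
proof (induction ps)
  case Nil
  show ?case by (simp add: pauli_def kron_list_def colorth_def)
next
  case (Cons p ps)
  have "colorth 2 (pauli1 p)" using qU[of p] by (auto simp: colorth_def numeral_2_eq_2 less_Suc_eq)
  from colorth_kron[OF this Cons.IH] show ?case by (simp add: pauli_def kron_list_Cons)
qed

definition rk1 :: "nat \<Rightarrow> complex mat \<Rightarrow> bool" where
  "rk1 m A \<longleftrightarrow> A \<in> carrier_mat m m \<and> (\<exists>v. \<forall>i<m. \<forall>j<m. A $$ (i,j) = v i * cnj (v j))"

lemma rk1_kron: assumes "rk1 m A" "rk1 p B" shows "rk1 (m*p) (kron A B)"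
proof -
  obtain v w where cA: "A \<in> carrier_mat m m" and cB: "B \<in> carrier_mat p p"
    and v: "\<forall>i<m. \<forall>j<m. A $$ (i,j) = v i * cnj (v j)" and w: "\<forall>i<p. \<forall>j<p. B $$ (i,j) = w i * cnj (w j)"
    using assms unfolding rk1_def by blast
  have "kron A B $$ (i,j) = (v (i div p) * w (i mod p)) * cnj (v (j div p) * w (j mod p))"
    if "i < m*p" "j < m*p" for i j
  proof -
    have a: "A $$ (i div p, j div p) = v (i div p) * cnj (v (j div p))"
      using v div_lt[OF that(1)] div_lt[OF that(2)] by blast
    have b: "B $$ (i mod p, j mod p) = w (i mod p) * cnj (w (j mod p))"
      using w mod_lt[OF that(1)] mod_lt[OF that(2)] by blast
    show ?thesis unfolding kron_index[OF cA cB that] a b by (simp add: mult_ac)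
  qed
  then show ?thesis using kron_carrier[OF cA cB] unfolding rk1_def
    by (intro conjI exI[of _ "\<lambda>i. v (i div p) * w (i mod p)"] allI impI) auto
qed

lemma rk1_PiP: assumes "P \<in> carrier_mat d d" shows "rk1 (d*d) (PiP P)"
proof -
  have "\<forall>i<d*d. \<forall>j<d*d. PiP P $$ (i,j) = P $$ (i mod d, i div d) * cnj (P $$ (j mod d, j div d))"
    using PiP_index[OF assms] by blast
  then show ?thesis unfolding rk1_def using PiP_carrier[OF assms] by (intro conjI exI[of _ "\<lambda>i. P $$ (i mod d, i div d)"])
qed

lemma rk1_traj: "set Ps \<subseteq> paulis n \<Longrightarrow> rk1 ((2^n*2^n)^length Ps) (traj_op Ps)"
proof (induction Ps)
  case Nil
  show ?case unfolding traj_op_def kron_list_def rk1_def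
    by (auto intro!: exI[of _ "\<lambda>_. 1"])
next
  case (Cons p Ps)
  then have "rk1 (2^n*2^n) (PiP (pauli p))" using rk1_PiP pauli_carrier' by auto
  from rk1_kron[OF this Cons.IH] Cons.prems show ?case by (simp add: traj_op_def kron_list_Cons)
qed

lemma rk1_psd: assumes "rk1 m A" shows "psd m A"
proof -
  obtain v where cA: "A \<in> carrier_mat m m" and v: "\<forall>i<m. \<forall>j<m. A $$ (i,j) = v i * cnj (v j)"
    using assms unfolding rk1_def by blast
  have "(\<Sum>i<m. \<Sum>j<m. cnj (x i) * A $$ (i,j) * x j) \<in> \<real> \<and> 0 \<le> Re (\<Sum>i<m. \<Sum>j<m. cnj (x i) * A $$ (i,j) * x j)"
    for x :: "nat \<Rightarrow> complex"
  proof -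
    let ?s = "\<Sum>i<m. cnj (x i) * v i"
    have cs: "(\<Sum>j<m. cnj (cnj (x j) * v j)) = cnj ?s" by (rule cnj_sum[symmetric])
    have "(\<Sum>i<m. \<Sum>j<m. cnj (x i) * A $$ (i,j) * x j) = (\<Sum>i<m. \<Sum>j<m. (cnj (x i) * v i) * cnj (cnj (x j) * v j))"
      using v by (intro sum.cong refl) (simp add: mult_ac)
    also have "\<dots> = ?s * (\<Sum>j<m. cnj (cnj (x j) * v j))" by (rule sum_product[symmetric])
    also have "\<dots> = ?s * cnj ?s" by (simp only: cs)
    also have "\<dots> = of_real ((Re ?s)^2 + (Im ?s)^2)" by (rule complex_mult_cnj)
    finally show ?thesis by simp
  qed
  then show ?thesis using cA unfolding psd_def Let_def by blast
qed

lemma mtrace_mult: assumes "A \<in> carrier_mat D D" "B \<in> carrier_mat D D"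
  shows "mtrace (A * B) = (\<Sum>i<D. \<Sum>c<D. A $$ (i,c) * B $$ (c,i))"
  unfolding mtrace_def using assms by (simp add: scalar_prod_def atLeast0LessThan)

lemma mult3_index: assumes "A \<in> carrier_mat D D" "B \<in> carrier_mat D D" "C \<in> carrier_mat D D" "a < D" "b < D"
  shows "(A * B * C) $$ (a,b) = (\<Sum>e<D. \<Sum>c<D. A $$ (a,c) * B $$ (c,e) * C $$ (e,b))"
proof -
  have "(A * B * C) $$ (a,b) = (\<Sum>c<D. \<Sum>e<D. A $$ (a,c) * B $$ (c,e) * C $$ (e,b))"
    using assms by (simp add: scalar_prod_def atLeast0LessThan sum_distrib_left mult.assoc)
  also have "\<dots> = (\<Sum>e<D. \<Sum>c<D. A $$ (a,c) * B $$ (c,e) * C $$ (e,b))" by (rule sum.swap)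
  finally show ?thesis .
qed

lemma psd_carrier: "psd D A \<Longrightarrow> A \<in> carrier_mat D D" by (simp add: psd_def)

lemma weight_quad: assumes "psd D M" "rk1 D A"
  shows "mtrace (A * M) \<in> \<real> \<and> 0 \<le> Re (mtrace (A * M))"
proof -
  obtain v where cA: "A \<in> carrier_mat D D" and v: "\<forall>i<D. \<forall>j<D. A $$ (i,j) = v i * cnj (v j)"
    using assms unfolding rk1_def by blast
  have cM: "M \<in> carrier_mat D D" using assms psd_carrier by auto
  have "mtrace (A * M) = (\<Sum>i<D. \<Sum>c<D. A $$ (i,c) * M $$ (c,i))" by (rule mtrace_mult[OF cA cM])
  also have "\<dots> = (\<Sum>i<D. \<Sum>c<D. cnj (v c) * M $$ (c,i) * v i)" using v by (intro sum.cong refl) (simp add: mult_ac)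
  also have "\<dots> = (\<Sum>c<D. \<Sum>i<D. cnj (v c) * M $$ (c,i) * v i)" by (rule sum.swap)
  finally have e: "mtrace (A * M) = (\<Sum>c<D. \<Sum>i<D. cnj (v c) * M $$ (c,i) * v i)" .
  from assms(1) have "let q = (\<Sum>i<D. \<Sum>j<D. cnj (v i) * M $$ (i,j) * v j) in q \<in> \<real> \<and> 0 \<le> Re q"
    unfolding psd_def by blast
  then show ?thesis unfolding e Let_def .
qed

lemma ptrace_PiP: assumes "ps \<in> paulis n" shows "ptrace_last (2^n) (PiP (pauli ps)) = 1\<^sub>m (2^n)"
proof -
  let ?d = "2^n :: nat"
  have cP: "pauli ps \<in> carrier_mat ?d ?d" using pauli_carrier'[OF assms] .
  have co: "colorth ?d (pauli ps)" using colorth_pauli[of ps] assms by (simp add: paulis_def)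
  have dr: "dim_row (PiP (pauli ps)) div ?d = ?d" "dim_col (PiP (pauli ps)) div ?d = ?d"
    using PiP_carrier[OF cP] by auto
  show ?thesis
  proof (rule eq_matI)
    fix a b assume ab: "a < dim_row (1\<^sub>m ?d)" "b < dim_col (1\<^sub>m ?d)"
    then have ab': "a < ?d" "b < ?d" by auto
    have "(\<Sum>c<?d. PiP (pauli ps) $$ (a * ?d + c, b * ?d + c)) = (\<Sum>c<?d. pauli ps $$ (c, a) * cnj (pauli ps $$ (c, b)))"
    proof (intro sum.cong refl)
      fix c assume c: "c \<in> {..<?d}"
      have l1: "a * ?d + c < ?d * ?d" "b * ?d + c < ?d * ?d" using ab' c idx_lt by auto
      show "PiP (pauli ps) $$ (a * ?d + c, b * ?d + c) = pauli ps $$ (c, a) * cnj (pauli ps $$ (c, b))"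
        using c by (simp add: PiP_index[OF cP l1])
    qed
    also have "\<dots> = (if a = b then 1 else 0)" using co ab' by (simp add: colorth_def)
    finally show "ptrace_last ?d (PiP (pauli ps)) $$ (a, b) = 1\<^sub>m ?d $$ (a, b)"
      using ab' unfolding ptrace_last_def dr by simp
  qed (auto simp: ptrace_last_def dr)
qed

lemma mtrace_ptrace: assumes "M \<in> carrier_mat (q*d) (q*d)" "d > 0"
  shows "mtrace (ptrace_last d M) = mtrace M"
proof -
  have dr: "dim_row M div d = q" using assms by auto
  have "mtrace (ptrace_last d M) = (\<Sum>a<q. \<Sum>c<d. M $$ (a*d+c, a*d+c))"
    unfolding mtrace_def ptrace_last_def using dr assms by simp
  also have "\<dots> = (\<Sum>i<q*d. M $$ (i,i))" by (rule sum_group[symmetric])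
  finally show ?thesis unfolding mtrace_def using assms by simp
qed

lemma mtrace_kron_one: assumes "A \<in> carrier_mat q q"
  shows "mtrace (kron A (1\<^sub>m d)) = of_nat d * mtrace A"
proof -
  have c: "kron A (1\<^sub>m d) \<in> carrier_mat (q*d) (q*d)" using kron_carrier[OF assms, of "1\<^sub>m d" d] by simp
  have "mtrace (kron A (1\<^sub>m d)) = (\<Sum>i<q*d. kron A (1\<^sub>m d) $$ (i,i))" unfolding mtrace_def using c by simp
  also have "\<dots> = (\<Sum>a<q. \<Sum>b<d. kron A (1\<^sub>m d) $$ (a*d+b,a*d+b))" by (rule sum_group)
  also have "\<dots> = (\<Sum>a<q. \<Sum>b<d. A $$ (a,a))"
  proof (intro sum.cong refl)
    fix a b assume ab: "a \<in> {..<q}" "b \<in> {..<d}"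
    then have lt: "a*d+b < q*d" using idx_lt by auto
    have dm: "(a*d+b) div d = a" "(a*d+b) mod d = b" "b mod d = b" using ab by auto
    show "kron A (1\<^sub>m d) $$ (a*d+b,a*d+b) = A $$ (a,a)"
      using ab by (simp add: kron_index[OF assms _ lt lt] dm)
  qed
  also have "\<dots> = of_nat d * mtrace A" unfolding mtrace_def using assms by (simp add: sum_distrib_left)
  finally show ?thesis .
qed

lemma pt_trace:
  assumes "process_tensor n k Ups"
  shows "mtrace Ups = of_nat (2^n) ^ Suc k"
proof -
  let ?d = "2^n :: nat"
  from assms obtain U where Uk: "U k = Ups" and cU: "\<forall>j\<le>k. U j \<in> carrier_mat (?d ^ (2 * Suc j)) (?d ^ (2 * Suc j))"
    and U0: "ptrace_last ?d (U 0) = 1\<^sub>m ?d" and Uj: "\<forall>j\<in>{1..k}. ptrace_last ?d (U j) = kron (U (j - 1)) (1\<^sub>m ?d)"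
    unfolding process_tensor_def Let_def by blast
  have pw: "?d ^ (2 * Suc j) = ?d ^ Suc (2*j) * ?d" for j by (simp add: power_Suc2 mult_ac)
  have "mtrace (U j) = of_nat ?d ^ Suc j" if "j \<le> k" for j
    using that
  proof (induction j)
    case 0
    have c0: "U 0 \<in> carrier_mat (?d ^ Suc (2*0) * ?d) (?d ^ Suc (2*0) * ?d)"
      using cU pw[of 0] by (metis le0)
    have "mtrace (U 0) = mtrace (ptrace_last ?d (U 0))"
      using mtrace_ptrace[OF c0] by simp
    also have "\<dots> = of_nat ?d" unfolding U0 mtrace_def by simp
    finally show ?case by simp
  next
    case (Suc j)
    have c: "U (Suc j) \<in> carrier_mat (?d ^ Suc (2*Suc j) * ?d) (?d ^ Suc (2*Suc j) * ?d)"
      using cU Suc.prems pw[of "Suc j"] by metis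
    have "mtrace (U (Suc j)) = mtrace (ptrace_last ?d (U (Suc j)))"
      using mtrace_ptrace[OF c] by simp
    also have "\<dots> = mtrace (kron (U j) (1\<^sub>m ?d))" using Uj Suc.prems by simp
    also have "\<dots> = of_nat ?d * mtrace (U j)"
      using mtrace_kron_one cU Suc.prems by (metis Suc_leD)
    also have "\<dots> = of_nat ?d ^ Suc (Suc j)" using Suc by simp
    finally show ?case .
  qed
  then show ?thesis using Uk by auto
qed

lemma dimD: "((2::nat)^n) ^ (2 * Suc k) = (2^n*2^n)^Suc k"
  by (simp add: power_mult power2_eq_square)

lemma trajs_eq: "trajectories n k = {xs. length xs = Suc k \<and> set xs \<subseteq> paulis n}"
  by (simp add: trajectories_def)

lemma trajs_fin: "finite (trajectories n k)"
  unfolding trajs_eq by (rule lists_fin[OF paulis_fin])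

lemma trajop_carrier: "Ps \<in> trajectories n k \<Longrightarrow> traj_op Ps \<in> carrier_mat ((2^n*2^n)^Suc k) ((2^n*2^n)^Suc k)"
  using rk1_traj[of Ps n] unfolding rk1_def trajs_eq by auto

lemma W_carrier: "Ps \<in> trajectories n k \<Longrightarrow>
  kron_list (map (\<lambda>p. kron (pauli p) (pauli p)) Ps) \<in> carrier_mat ((2^n*2^n)^Suc k) ((2^n*2^n)^Suc k)"
proof -
  assume "Ps \<in> trajectories n k"
  then have l: "length Ps = Suc k" "set Ps \<subseteq> paulis n" unfolding trajs_eq by auto
  have "\<forall>A\<in>set (map (\<lambda>p. kron (pauli p) (pauli p)) Ps). A \<in> carrier_mat (2^n*2^n) (2^n*2^n)"
    using l(2) kron_carrier pauli_carrier' by auto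
  from kron_list_carrier[OF this] show ?thesis using l by simp
qed

lemma weight_eq: "Ps \<in> trajectories n k \<Longrightarrow> Ups \<in> carrier_mat ((2^n*2^n)^Suc k) ((2^n*2^n)^Suc k) \<Longrightarrow>
   traj_weight Ups Ps = (\<Sum>i<(2^n*2^n)^Suc k. \<Sum>c<(2^n*2^n)^Suc k. traj_op Ps $$ (i,c) * Ups $$ (c,i))"
  unfolding traj_weight_def by (rule mtrace_mult[OF trajop_carrier])

lemma norm_eq:
  assumes cU: "Ups \<in> carrier_mat ((2^n*2^n)^Suc k) ((2^n*2^n)^Suc k)"
  shows "traj_norm n k Ups = (2^n)^Suc k * mtrace Ups"
proof -
  let ?D = "(2^n*2^n)^Suc k :: nat"
  let ?T = "trajectories n k"
  have "traj_norm n k Ups = (\<Sum>Ps\<in>?T. \<Sum>i<?D. \<Sum>c<?D. traj_op Ps $$ (i,c) * Ups $$ (c,i))"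
    unfolding traj_norm_def using weight_eq[OF _ cU] by (intro sum.cong refl) auto
  also have "\<dots> = (\<Sum>i<?D. \<Sum>Ps\<in>?T. \<Sum>c<?D. traj_op Ps $$ (i,c) * Ups $$ (c,i))" by (rule sum.swap)
  also have "\<dots> = (\<Sum>i<?D. \<Sum>c<?D. \<Sum>Ps\<in>?T. traj_op Ps $$ (i,c) * Ups $$ (c,i))"
    by (intro sum.cong refl sum.swap)
  also have "\<dots> = (\<Sum>i<?D. \<Sum>c<?D. (\<Sum>Ps\<in>?T. traj_op Ps $$ (i,c)) * Ups $$ (c,i))"
    by (simp add: sum_distrib_right)
  also have "\<dots> = (\<Sum>i<?D. \<Sum>c<?D. ((2^n)^Suc k * (if i = c then 1 else 0)) * Ups $$ (c,i))"
  proof (intro sum.cong refl)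
    fix i c assume "i \<in> {..<?D}" "c \<in> {..<?D}"
    then show "(\<Sum>Ps\<in>?T. traj_op Ps $$ (i,c)) * Ups $$ (c,i) = ((2^n)^Suc k * (if i = c then 1 else 0)) * Ups $$ (c,i)"
      using traj_D[of i n "Suc k" c] unfolding trajs_eq traj_op_def by simp
  qed
  also have "\<dots> = (\<Sum>i<?D. (2^n)^Suc k * Ups $$ (i,i))"
    by (intro sum.cong refl) (simp add: if_distrib if_distribR sum.delta cong: if_cong)
  also have "\<dots> = (2^n)^Suc k * mtrace Ups" unfolding mtrace_def using cU by (simp add: sum_distrib_left)
  finally show ?thesis .
qed

lemma twirl_entry:
  assumes cU: "Ups \<in> carrier_mat ((2^n*2^n)^Suc k) ((2^n*2^n)^Suc k)"
    and ab: "a < (2^n*2^n)^Suc k" "b < (2^n*2^n)^Suc k"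
  shows "(\<Sum>Ps\<in>trajectories n k. (c0 \<cdot>\<^sub>m (let W = kron_list (map (\<lambda>p. kron (pauli p) (pauli p)) Ps) in W * Ups * W)) $$ (a,b))
    = c0 * (\<Sum>Ps\<in>trajectories n k. traj_weight Ups Ps * traj_op Ps $$ (a,b))"
proof -
  let ?D = "(2^n*2^n)^Suc k :: nat"
  let ?T = "trajectories n k"
  let ?W = "\<lambda>Ps. kron_list (map (\<lambda>p. kron (pauli p) (pauli p)) Ps)"
  let ?O = "\<lambda>Ps. traj_op Ps"
  have "(\<Sum>Ps\<in>?T. (c0 \<cdot>\<^sub>m (let W = ?W Ps in W * Ups * W)) $$ (a,b))
      = (\<Sum>Ps\<in>?T. c0 * (\<Sum>e<?D. \<Sum>c<?D. ?W Ps $$ (a,c) * Ups $$ (c,e) * ?W Ps $$ (e,b)))"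
  proof (intro sum.cong refl)
    fix Ps assume P: "Ps \<in> ?T"
    have c: "?W Ps * Ups * ?W Ps \<in> carrier_mat ?D ?D" using W_carrier[OF P] cU by auto
    show "(c0 \<cdot>\<^sub>m (let W = ?W Ps in W * Ups * W)) $$ (a,b) = c0 * (\<Sum>e<?D. \<Sum>c<?D. ?W Ps $$ (a,c) * Ups $$ (c,e) * ?W Ps $$ (e,b))"
    proof -
      have r: "a < dim_row (?W Ps * Ups * ?W Ps)" "b < dim_col (?W Ps * Ups * ?W Ps)" using c ab by auto
      show ?thesis unfolding Let_def index_smult_mat(1)[OF r] mult3_index[OF W_carrier[OF P] cU W_carrier[OF P] ab] ..
    qed
  qed
  also have "\<dots> = c0 * (\<Sum>Ps\<in>?T. \<Sum>e<?D. \<Sum>c<?D. ?W Ps $$ (a,c) * Ups $$ (c,e) * ?W Ps $$ (e,b))"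
    by (simp add: sum_distrib_left)
  also have "(\<Sum>Ps\<in>?T. \<Sum>e<?D. \<Sum>c<?D. ?W Ps $$ (a,c) * Ups $$ (c,e) * ?W Ps $$ (e,b))
      = (\<Sum>e<?D. \<Sum>c<?D. \<Sum>Ps\<in>?T. ?W Ps $$ (a,c) * Ups $$ (c,e) * ?W Ps $$ (e,b))"
    by (subst sum.swap) (intro sum.cong refl sum.swap)
  also have "\<dots> = (\<Sum>e<?D. \<Sum>c<?D. Ups $$ (c,e) * (\<Sum>Ps\<in>?T. ?W Ps $$ (a,c) * ?W Ps $$ (e,b)))"
    by (simp add: sum_distrib_left mult_ac)
  also have "\<dots> = (\<Sum>e<?D. \<Sum>c<?D. Ups $$ (c,e) * (\<Sum>Ps\<in>?T. ?O Ps $$ (e,c) * ?O Ps $$ (a,b)))"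
  proof (intro sum.cong refl)
    fix e c assume "e \<in> {..<?D}" "c \<in> {..<?D}"
    then show "Ups $$ (c,e) * (\<Sum>Ps\<in>?T. ?W Ps $$ (a,c) * ?W Ps $$ (e,b)) = Ups $$ (c,e) * (\<Sum>Ps\<in>?T. ?O Ps $$ (e,c) * ?O Ps $$ (a,b))"
      using traj_K[of a n "Suc k" b c e] ab unfolding trajs_eq traj_op_def by simp
  qed
  also have "\<dots> = (\<Sum>e<?D. \<Sum>c<?D. \<Sum>Ps\<in>?T. (?O Ps $$ (e,c) * Ups $$ (c,e)) * ?O Ps $$ (a,b))"
    by (simp add: sum_distrib_left mult_ac)
  also have "\<dots> = (\<Sum>Ps\<in>?T. \<Sum>e<?D. \<Sum>c<?D. (?O Ps $$ (e,c) * Ups $$ (c,e)) * ?O Ps $$ (a,b))"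
    by (subst sum.swap) (intro sum.cong refl sum.swap)
  also have "\<dots> = (\<Sum>Ps\<in>?T. traj_weight Ups Ps * traj_op Ps $$ (a,b))"
  proof (intro sum.cong refl)
    fix Ps assume P: "Ps \<in> ?T"
    show "(\<Sum>e<?D. \<Sum>c<?D. (?O Ps $$ (e,c) * Ups $$ (c,e)) * ?O Ps $$ (a,b)) = traj_weight Ups Ps * traj_op Ps $$ (a,b)"
      unfolding weight_eq[OF P cU] by (simp add: sum_distrib_right)
  qed
  finally show ?thesis .
qed

theorem theorem1:
  fixes n k :: nat and Ups :: "complex mat"
  assumes "process_tensor n k Ups"
  shows "(\<forall>Ps\<in>trajectories n k. traj_weight Ups Ps \<in> \<real> \<and> 0 \<le> Re (traj_weight Ups Ps))
    \<and> pauli_twirl n k Ups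
        = msum (dim_row Ups) (\<lambda>Ps. traj_prob n k Ups Ps \<cdot>\<^sub>m traj_op Ps) (trajectories n k)
    \<and> (\<forall>Ps\<in>trajectories n k. traj_prob n k Ups Ps \<in> \<real> \<and> 0 \<le> Re (traj_prob n k Ups Ps))
    \<and> (\<Sum>Ps\<in>trajectories n k. traj_prob n k Ups Ps) = 1
    \<and> process_separable (2 ^ n) k (pauli_twirl n k Ups)"
proof -
  let ?d = "2^n :: nat"
  let ?D = "(2^n*2^n)^Suc k :: nat"
  let ?T = "trajectories n k"
  have ps: "psd ?D Ups" using assms unfolding process_tensor_def Let_def dimD by blast
  have cU: "Ups \<in> carrier_mat ?D ?D" using psd_carrier[OF ps] .
  have dU: "dim_row Ups = ?D" using cU by auto
  have tr: "mtrace Ups = of_nat ?d ^ Suc k" by (rule pt_trace[OF assms])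
  define R :: real where "R = (2^n)^Suc k * (2^n)^Suc k"
  have Rpos: "R > 0" unfolding R_def by simp
  have N: "traj_norm n k Ups = of_real R"
    unfolding norm_eq[OF cU] tr R_def by simp
  have c0: "1 / of_nat (4^n) ^ Suc k = 1 / traj_norm n k Ups"
  proof -
    have "(4::complex)^n = 2^n*2^n" by (simp add: power_mult_distrib[symmetric])
    then show ?thesis unfolding N R_def by (simp add: power_mult_distrib)
  qed
  have W1: "\<forall>Ps\<in>?T. traj_weight Ups Ps \<in> \<real> \<and> 0 \<le> Re (traj_weight Ups Ps)"
  proof
    fix Ps assume P: "Ps \<in> ?T"
    then have "rk1 ?D (traj_op Ps)" using rk1_traj[of Ps n] unfolding trajs_eq by auto
    from weight_quad[OF ps this] show "traj_weight Ups Ps \<in> \<real> \<and> 0 \<le> Re (traj_weight Ups Ps)"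
      unfolding traj_weight_def .
  qed
  have W2: "pauli_twirl n k Ups = msum (dim_row Ups) (\<lambda>Ps. traj_prob n k Ups Ps \<cdot>\<^sub>m traj_op Ps) ?T"
    unfolding pauli_twirl_def msum_def dU
  proof (rule cong_mat[OF refl refl])
    fix a b assume ab: "a < ?D" "b < ?D"
    have "(\<Sum>Ps\<in>?T. (traj_prob n k Ups Ps \<cdot>\<^sub>m traj_op Ps) $$ (a,b))
        = (\<Sum>Ps\<in>?T. (1 / traj_norm n k Ups) * (traj_weight Ups Ps * traj_op Ps $$ (a,b)))"
    proof (intro sum.cong refl)
      fix Ps assume P: "Ps \<in> ?T"
      have r: "a < dim_row (traj_op Ps)" "b < dim_col (traj_op Ps)" using trajop_carrier[OF P] ab by auto
      show "(traj_prob n k Ups Ps \<cdot>\<^sub>m traj_op Ps) $$ (a,b) = (1 / traj_norm n k Ups) * (traj_weight Ups Ps * traj_op Ps $$ (a,b))"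
        unfolding index_smult_mat(1)[OF r] traj_prob_def by simp
    qed
    also have "\<dots> = (1 / traj_norm n k Ups) * (\<Sum>Ps\<in>?T. traj_weight Ups Ps * traj_op Ps $$ (a,b))"
      by (simp add: sum_distrib_left)
    finally have fin: "(\<Sum>Ps\<in>?T. (traj_prob n k Ups Ps \<cdot>\<^sub>m traj_op Ps) $$ (a,b))
        = (1 / traj_norm n k Ups) * (\<Sum>Ps\<in>?T. traj_weight Ups Ps * traj_op Ps $$ (a,b))" .
    have te: "(\<Sum>x\<in>?T. (1 / of_nat (4 ^ n) ^ Suc k \<cdot>\<^sub>m
              (let W = kron_list (map (\<lambda>p. kron (pauli p) (pauli p)) x) in W * Ups * W)) $$ (a, b))
        = (1 / of_nat (4 ^ n) ^ Suc k) * (\<Sum>Ps\<in>?T. traj_weight Ups Ps * traj_op Ps $$ (a,b))"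
      by (rule twirl_entry[OF cU ab])
    show "(case (a, b) of (a, b) \<Rightarrow> \<Sum>x\<in>?T. (1 / of_nat (4 ^ n) ^ Suc k \<cdot>\<^sub>m
              (let W = kron_list (map (\<lambda>p. kron (pauli p) (pauli p)) x) in W * Ups * W)) $$ (a, b))
        = (case (a, b) of (a, b) \<Rightarrow> \<Sum>x\<in>?T. (traj_prob n k Ups x \<cdot>\<^sub>m traj_op x) $$ (a, b))"
      unfolding prod.case te fin unfolding c0 by (rule refl)
  qed
  have W3: "\<forall>Ps\<in>?T. traj_prob n k Ups Ps \<in> \<real> \<and> 0 \<le> Re (traj_prob n k Ups Ps)"
  proof
    fix Ps assume P: "Ps \<in> ?T"
    have "traj_weight Ups Ps \<in> \<real>" "0 \<le> Re (traj_weight Ups Ps)" using W1 P by auto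
    then show "traj_prob n k Ups Ps \<in> \<real> \<and> 0 \<le> Re (traj_prob n k Ups Ps)"
      unfolding traj_prob_def N using Rpos by auto
  qed
  have W4: "(\<Sum>Ps\<in>?T. traj_prob n k Ups Ps) = 1"
  proof -
    have "(\<Sum>Ps\<in>?T. traj_prob n k Ups Ps) = (\<Sum>Ps\<in>?T. traj_weight Ups Ps) / traj_norm n k Ups"
      by (simp add: traj_prob_def sum_divide_distrib)
    also have "(\<Sum>Ps\<in>?T. traj_weight Ups Ps) = traj_norm n k Ups" by (simp add: traj_norm_def)
    also have "traj_norm n k Ups / traj_norm n k Ups = 1" using N Rpos by simp
    finally show ?thesis .
  qed
  have W5: "process_separable (2 ^ n) k (pauli_twirl n k Ups)"
  proof -
    obtain h where h: "bij_betw h {0..<card ?T} ?T" using ex_bij_betw_nat_finite[OF trajs_fin] by blast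
    let ?I = "{0..<card ?T}"
    let ?p = "\<lambda>i. Re (traj_prob n k Ups (h i))"
    let ?C = "\<lambda>i. map (\<lambda>p. PiP (pauli p)) (h i)"
    have hT: "h i \<in> ?T" if "i \<in> ?I" for i by (rule bij_betw_apply[OF h that])
    have p0: "\<forall>i\<in>?I. 0 \<le> ?p i"
    proof
      fix i assume i: "i \<in> ?I"
      have "h i \<in> ?T" by (rule hT[OF i])
      then show "0 \<le> ?p i" using W3 by blast
    qed
    have p1: "(\<Sum>i\<in>?I. ?p i) = 1"
    proof -
      have "(\<Sum>i\<in>?I. ?p i) = Re (\<Sum>i\<in>?I. traj_prob n k Ups (h i))" by (simp add: Re_sum)
      also have "(\<Sum>i\<in>?I. traj_prob n k Ups (h i)) = (\<Sum>Ps\<in>?T. traj_prob n k Ups Ps)"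
        by (rule sum.reindex_bij_betw[OF h])
      finally show ?thesis using W4 by simp
    qed
    have C: "\<forall>i\<in>?I. length (?C i) = Suc k \<and> (\<forall>c\<in>set (?C i). cptp_choi (2^n) c)"
    proof
      fix i assume i: "i \<in> ?I"
      have l: "length (h i) = Suc k" "set (h i) \<subseteq> paulis n" using hT[OF i] unfolding trajs_eq by auto
      have "cptp_choi (2^n) (PiP (pauli q))" if "q \<in> paulis n" for q
        unfolding cptp_choi_def using rk1_psd[OF rk1_PiP[OF pauli_carrier'[OF that]]] ptrace_PiP[OF that] by simp
      then show "length (?C i) = Suc k \<and> (\<forall>c\<in>set (?C i). cptp_choi (2^n) c)" using l by auto
    qed
    have dT: "dim_row (pauli_twirl n k Ups) = ?D" unfolding pauli_twirl_def msum_def dU by simp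
    have M': "pauli_twirl n k Ups = msum ?D (\<lambda>i. complex_of_real (?p i) \<cdot>\<^sub>m kron_list (?C i)) ?I"
    proof -
      show ?thesis unfolding W2 msum_def dU
      proof (rule cong_mat[OF refl refl])
        fix a b assume ab: "a < ?D" "b < ?D"
        have "(\<Sum>i\<in>?I. (complex_of_real (?p i) \<cdot>\<^sub>m kron_list (?C i)) $$ (a,b))
            = (\<Sum>i\<in>?I. (traj_prob n k Ups (h i) \<cdot>\<^sub>m traj_op (h i)) $$ (a,b))"
        proof (intro sum.cong refl)
          fix i assume i: "i \<in> ?I"
          have "traj_prob n k Ups (h i) \<in> \<real>" using W3 hT[OF i] by blast
          then show "(complex_of_real (?p i) \<cdot>\<^sub>m kron_list (?C i)) $$ (a,b) = (traj_prob n k Ups (h i) \<cdot>\<^sub>m traj_op (h i)) $$ (a,b)"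
            unfolding traj_op_def by simp
        qed
        also have "\<dots> = (\<Sum>Ps\<in>?T. (traj_prob n k Ups Ps \<cdot>\<^sub>m traj_op Ps) $$ (a,b))"
          by (rule sum.reindex_bij_betw[OF h, where g = "\<lambda>Ps. (traj_prob n k Ups Ps \<cdot>\<^sub>m traj_op Ps) $$ (a,b)"])
        finally show "(case (a, b) of (a, b) \<Rightarrow> \<Sum>x\<in>?T. (traj_prob n k Ups x \<cdot>\<^sub>m traj_op x) $$ (a, b))
           = (case (a, b) of (a, b) \<Rightarrow> \<Sum>x\<in>?I. (complex_of_real (?p x) \<cdot>\<^sub>m kron_list (?C x)) $$ (a, b))"
          by simp
      qed
    qed
    have M: "pauli_twirl n k Ups = msum (dim_row (pauli_twirl n k Ups)) (\<lambda>i. complex_of_real (?p i) \<cdot>\<^sub>m kron_list (?C i)) ?I"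
      by (subst dT) (rule M')
    have fI: "finite ?I" by simp
    show ?thesis unfolding process_separable_def
      by (intro exI[of _ ?I] exI[of _ ?p] exI[of _ ?C] conjI fI p0 p1 C M)
  qed
  show ?thesis by (intro conjI W1 W2 W3 W4 W5)
qed

end
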